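(* Let $\mathcal{R}=\{R_1,\ldots,R_n\}$ be a family of axis-aligned rectangles in $\mathbb{R}^2$ such that the $2n$ $x$-coordinates of the vertical sides are pairwise distinct and the $2n$ $y$-coordinates of the horizontal sides are pairwise distinct. Let $a_1,\ldots,a_{2n}$ be its $x$-sequence and $b_1,\ldots,b_{2n}$ its $y$-sequence, and for each $i$ let $a(i)=(j_1,j_2)$ and $b(i)=(j_1',j_2')$. Then there exists a family of axis-aligned squares $\mathcal{S}=\{S_1,\ldots,S_n\}$ whose $x$-sequence equals that of $\mathcal{R}$ and whose $y$-sequence equals that of $\mathcal{R}$ if and only if the following linear program in the variables $x_1,\ldots,x_{2n-1},y_1,\ldots,y_{2n-1}$ is feasible: $$x_k\ge 1,\ y_k\ge 1 \ (k=1,\ldots,2n-1),\qquad \sum_{k=j_1}^{j_2-1}x_k=\sum_{k=j_1'}^{j_2'-1}y_k \ \text{ for every } i=1,\ldots,n, \text{ where } a(i)=(j_1,j_2),\ b(i)=(j_1',j_2').$$ Moreover, from a feasible solution one obtains such squares by setting $l(S_i)=\sum_{k=1}^{j_1-1}x_k$, $r(S_i)=\sum_{k=1}^{j_2-1}x_k$, $b(S_i)=\sum_{k=1}^{j_1'-1}y_k$, $t(S_i)=\sum_{k=1}^{j_2'-1}y_k$.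
   Context: For an axis-aligned rectangle $R$, $l(R),r(R)$ denote the $x$-coordinates of its left and right sides and $b(R),t(R)$ the $y$-coordinates of its bottom and top sides. For a family $\{R_1,\ldots,R_n\}$ of axis-aligned rectangles with pairwise distinct vertical-side $x$-coordinates, list the $2n$ values $l(R_i), r(R_i)$ in increasing order $a'_1<\cdots<a'_{2n}$ and replace each value $l(R_i)$ or $r(R_i)$ by the index $i$; the resulting sequence $a_1,\ldots,a_{2n}$ (in which each $i\in\{1,\ldots,n\}$ appears exactly twice) is the $x$-sequence, and $a(i)=(j_1,j_2)$ denotes the pair of positions $j_1<j_2$ with $a_{j_1}=a_{j_2}=i$. The $y$-sequence $b_1,\ldots,b_{2n}$ and the function $b(i)=(j_1',j_2')$ are defined analogously using the values $b(R_i),t(R_i)$. The same definitions apply to families of squares, which must then also have pairwise distinct such coordinates. *)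

theory Defs
  imports Complex_Main
begin

text \<open>A family of n axis-aligned rectangles is given by four coordinate functions
  l r b t :: nat => real on the index set {1..n}: rectangle i is
  [l i, r i] x [b i, t i].\<close>

definition rect_family :: "nat \<Rightarrow> (nat \<Rightarrow> real) \<Rightarrow> (nat \<Rightarrow> real) \<Rightarrow> (nat \<Rightarrow> real) \<Rightarrow> (nat \<Rightarrow> real) \<Rightarrow> bool" where
  "rect_family n l r b t \<longleftrightarrow> (\<forall>i\<in>{1..n}. l i < r i \<and> b i < t i)"

definition square_family :: "nat \<Rightarrow> (nat \<Rightarrow> real) \<Rightarrow> (nat \<Rightarrow> real) \<Rightarrow> (nat \<Rightarrow> real) \<Rightarrow> (nat \<Rightarrow> real) \<Rightarrow> bool" where
  "square_family n l r b t \<longleftrightarrow> rect_family n l r b t \<and> (\<forall>i\<in>{1..n}. r i - l i = t i - b i)"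

definition distinct_coords :: "nat \<Rightarrow> (nat \<Rightarrow> real) \<Rightarrow> (nat \<Rightarrow> real) \<Rightarrow> bool" where
  "distinct_coords n l r \<longleftrightarrow> inj_on l {1..n} \<and> inj_on r {1..n} \<and> (\<forall>i\<in>{1..n}. \<forall>j\<in>{1..n}. l i \<noteq> r j)"

definition coord_vals :: "nat \<Rightarrow> (nat \<Rightarrow> real) \<Rightarrow> (nat \<Rightarrow> real) \<Rightarrow> real set" where
  "coord_vals n l r = l ` {1..n} \<union> r ` {1..n}"

definition coord_seq :: "nat \<Rightarrow> (nat \<Rightarrow> real) \<Rightarrow> (nat \<Rightarrow> real) \<Rightarrow> nat list" where
  "coord_seq n l r = map (\<lambda>v. THE i. i \<in> {1..n} \<and> (l i = v \<or> r i = v))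
                          (sorted_list_of_set (coord_vals n l r))"

text \<open>Positions (1-based) j1 < j2 at which index i occurs in a sequence s;
  a(i) = (seq_fst s i, seq_snd s i).\<close>
definition seq_occ :: "nat list \<Rightarrow> nat \<Rightarrow> nat set" where
  "seq_occ s i = {j. 1 \<le> j \<and> j \<le> length s \<and> s ! (j - 1) = i}"

definition seq_fst :: "nat list \<Rightarrow> nat \<Rightarrow> nat" where
  "seq_fst s i = Min (seq_occ s i)"

definition seq_snd :: "nat list \<Rightarrow> nat \<Rightarrow> nat" where
  "seq_snd s i = Max (seq_occ s i)"

definition lp_feasible_sol :: "nat \<Rightarrow> nat list \<Rightarrow> nat list \<Rightarrow> (nat \<Rightarrow> real) \<Rightarrow> (nat \<Rightarrow> real) \<Rightarrow> bool" where
  "lp_feasible_sol n as bs x y \<longleftrightarrow>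
     (\<forall>k\<in>{1..2*n-1}. x k \<ge> 1 \<and> y k \<ge> 1) \<and>
     (\<forall>i\<in>{1..n}. (\<Sum>k\<in>{seq_fst as i..<seq_snd as i}. x k) = (\<Sum>k\<in>{seq_fst bs i..<seq_snd bs i}. y k))"

end

theory Submission
  imports Defs
begin

lemma card_V:
  assumes dc: "distinct_coords n l r"
  shows "card (coord_vals n l r) = 2*n"
proof -
  have d: "l ` {1..n} \<inter> r ` {1..n} = {}" using dc unfolding distinct_coords_def by auto
  have "card (coord_vals n l r) = card (l ` {1..n}) + card (r ` {1..n})"
    unfolding coord_vals_def by (rule card_Un_disjoint) (use d in auto)
  also have "\<dots> = 2*n" using dc unfolding distinct_coords_def by (simp add: card_image)
  finally show ?thesis .
qed

lemma key:
  assumes lr: "\<forall>i\<in>{1..n}. l i < r i" and dc: "distinct_coords n l r"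
  defines "s \<equiv> coord_seq n l r" and "L \<equiv> sorted_list_of_set (coord_vals n l r)"
  shows "length s = 2*n" "length L = 2*n" "\<forall>a b. a<b \<longrightarrow> b<2*n \<longrightarrow> L!a < L!b"
    "\<forall>i\<in>{1..n}. 1 \<le> seq_fst s i \<and> seq_fst s i < seq_snd s i \<and> seq_snd s i \<le> 2*n
        \<and> L!(seq_fst s i - 1) = l i \<and> L!(seq_snd s i - 1) = r i
        \<and> s!(seq_fst s i - 1) = i \<and> s!(seq_snd s i - 1) = i"
    "\<forall>j\<in>{1..2*n}. s!(j-1) \<in> {1..n} \<and> (seq_fst s (s!(j-1)) = j \<or> seq_snd s (s!(j-1)) = j)"
proof -
  have fin: "finite (coord_vals n l r)" unfolding coord_vals_def by auto
  show lL: "length L = 2*n" using card_V[OF dc] fin unfolding L_def by simp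
  have setL: "set L = coord_vals n l r" using fin unfolding L_def by simp
  have sL: "sorted L" and dL: "distinct L" unfolding L_def by auto
  show ls: "length s = 2*n" unfolding s_def coord_seq_def using lL L_def by simp
  show strict: "\<forall>a b. a<b \<longrightarrow> b<2*n \<longrightarrow> L!a < L!b"
  proof (intro allI impI)
    fix a b :: nat assume "a<b" "b<2*n"
    then have "L!a \<le> L!b" using sL lL by (simp add: sorted_nth_mono)
    moreover have "L!a \<noteq> L!b" using dL lL \<open>a<b\<close> \<open>b<2*n\<close> by (simp add: nth_eq_iff_index_eq)
    ultimately show "L!a < L!b" by simp
  qed
  have injl: "inj_on l {1..n}" and injr: "inj_on r {1..n}" and lrd: "\<forall>i\<in>{1..n}. \<forall>j\<in>{1..n}. l i \<noteq> r j"
    using dc unfolding distinct_coords_def by auto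
  define own where "own v = (THE i. i \<in> {1..n} \<and> (l i = v \<or> r i = v))" for v
  have ownl: "own (l i) = i" if "i \<in> {1..n}" for i
    unfolding own_def
  proof (rule the_equality)
    show "i \<in> {1..n} \<and> (l i = l i \<or> r i = l i)" using that by simp
    fix k assume "k \<in> {1..n} \<and> (l k = l i \<or> r k = l i)"
    then show "k = i" using injl lrd that by (metis inj_onD)
  qed
  have ownr: "own (r i) = i" if "i \<in> {1..n}" for i
    unfolding own_def
  proof (rule the_equality)
    show "i \<in> {1..n} \<and> (l i = r i \<or> r i = r i)" using that by simp
    fix k assume "k \<in> {1..n} \<and> (l k = r i \<or> r k = r i)"
    then show "k = i" using injr lrd that by (metis inj_onD)
  qed
  have smap: "s = map own L" unfolding s_def coord_seq_def own_def L_def by (rule refl)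
  have snth: "s!j = own (L!j)" if "j < 2*n" for j
    using that lL smap by simp
  have Lmem: "L!j \<in> coord_vals n l r" if "j<2*n" for j using setL lL that by auto
  have Linj: "L!a = L!b \<longleftrightarrow> a = b" if "a<2*n" "b<2*n" for a b
    using dL lL that by (simp add: nth_eq_iff_index_eq)
  have occ: "\<exists>jl jr. 1 \<le> jl \<and> jl < jr \<and> jr \<le> 2*n \<and> L!(jl-1) = l i \<and> L!(jr-1) = r i
     \<and> seq_occ s i = {jl, jr}" if i: "i\<in>{1..n}" for i
  proof -
    have "l i \<in> set L" using setL i unfolding coord_vals_def by auto
    then obtain a where a: "a < 2*n" "L!a = l i" using lL by (metis in_set_conv_nth)
    have "r i \<in> set L" using setL i unfolding coord_vals_def by auto
    then obtain b where b: "b < 2*n" "L!b = r i" using lL by (metis in_set_conv_nth)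
    have ab: "a < b"
    proof (rule ccontr)
      assume "\<not> a < b"
      then have "b \<le> a" by simp
      then have "L!b \<le> L!a" using strict a b by (metis le_less order_refl)
      moreover have "l i < r i" using lr i by blast
      ultimately show False using a b by simp
    qed
    have "seq_occ s i = {Suc a, Suc b}"
    proof (rule set_eqI)
      fix j
      show "j \<in> seq_occ s i \<longleftrightarrow> j \<in> {Suc a, Suc b}"
      proof
        assume "j \<in> seq_occ s i"
        then have j: "1 \<le> j" "j \<le> 2*n" "s!(j-1) = i" unfolding seq_occ_def using ls by auto
        then have jj: "j - 1 < 2*n" by simp
        have "own (L!(j-1)) = i" using snth[OF jj] j by simp
        moreover from Lmem[OF jj] obtain k where k: "k\<in>{1..n}" "L!(j-1) = l k \<or> L!(j-1) = r k"
          unfolding coord_vals_def by auto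
        ultimately have "k = i" using ownl ownr by auto
        then have "L!(j-1) = L!a \<or> L!(j-1) = L!b" using k a b by auto
        then have "j - 1 = a \<or> j - 1 = b" using Linj[OF jj a(1)] Linj[OF jj b(1)] by blast
        then show "j \<in> {Suc a, Suc b}" using j by auto
      next
        assume "j \<in> {Suc a, Suc b}"
        then consider "j = Suc a" | "j = Suc b" by blast
        then show "j \<in> seq_occ s i"
        proof cases
          case 1
          have "s!a = i" using snth[OF a(1)] a(2) ownl[OF i] by simp
          then show ?thesis unfolding seq_occ_def using 1 ls a(1) by simp
        next
          case 2
          have "s!b = i" using snth[OF b(1)] b(2) ownr[OF i] by simp
          then show ?thesis unfolding seq_occ_def using 2 ls b(1) by simp
        qed
      qed
    qed
    moreover have "1 \<le> Suc a" "Suc a < Suc b" "Suc b \<le> 2*n" "L!(Suc a - 1) = l i" "L!(Suc b - 1) = r i"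
      using a b ab by simp_all
    ultimately show ?thesis by blast
  qed
  have fs: "seq_fst s i = jl \<and> seq_snd s i = jr" if "jl < jr" "seq_occ s i = {jl, jr}" for i jl jr
    unfolding seq_fst_def seq_snd_def using that by (simp add: max_def min_def)
  have ssnd: "s!(j-1) = i" if "j \<in> seq_occ s i" for i j using that unfolding seq_occ_def by auto
  show P4: "\<forall>i\<in>{1..n}. 1 \<le> seq_fst s i \<and> seq_fst s i < seq_snd s i \<and> seq_snd s i \<le> 2*n
        \<and> L!(seq_fst s i - 1) = l i \<and> L!(seq_snd s i - 1) = r i
        \<and> s!(seq_fst s i - 1) = i \<and> s!(seq_snd s i - 1) = i"
  proof
    fix i assume i: "i\<in>{1..n}"
    from occ[OF i] obtain jl jr where *: "1 \<le> jl" "jl < jr" "jr \<le> 2*n" "L!(jl-1) = l i" "L!(jr-1) = r i"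
      "seq_occ s i = {jl, jr}" by blast
    then have "seq_fst s i = jl" "seq_snd s i = jr" using fs by auto
    moreover have "s!(jl-1) = i" "s!(jr-1) = i" using ssnd *(6) by auto
    ultimately show "1 \<le> seq_fst s i \<and> seq_fst s i < seq_snd s i \<and> seq_snd s i \<le> 2*n
        \<and> L!(seq_fst s i - 1) = l i \<and> L!(seq_snd s i - 1) = r i
        \<and> s!(seq_fst s i - 1) = i \<and> s!(seq_snd s i - 1) = i" using * by simp
  qed
  show "\<forall>j\<in>{1..2*n}. s!(j-1) \<in> {1..n} \<and> (seq_fst s (s!(j-1)) = j \<or> seq_snd s (s!(j-1)) = j)"
  proof
    fix j assume j: "j \<in> {1..2*n}"
    then have jj: "j - 1 < 2*n" by auto
    from Lmem[OF jj] obtain k where k: "k\<in>{1..n}" "L!(j-1) = l k \<or> L!(j-1) = r k"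
      unfolding coord_vals_def by auto
    have sk: "s!(j-1) = k" using snth[OF jj] k ownl ownr by auto
    from P4 k(1) have "L!(seq_fst s k - 1) = l k" "L!(seq_snd s k - 1) = r k"
      "1 \<le> seq_fst s k" "seq_fst s k < seq_snd s k" "seq_snd s k \<le> 2*n" by auto
    then have "seq_fst s k - 1 < 2*n" "seq_snd s k - 1 < 2*n" by auto
    with k(2) \<open>L!(seq_fst s k - 1) = l k\<close> \<open>L!(seq_snd s k - 1) = r k\<close>
    have "seq_fst s k - 1 = j - 1 \<or> seq_snd s k - 1 = j - 1" using Linj jj by metis
    then have "seq_fst s k = j \<or> seq_snd s k = j" using j \<open>1 \<le> seq_fst s k\<close> \<open>seq_fst s k < seq_snd s k\<close> by auto
    then show "s!(j-1) \<in> {1..n} \<and> (seq_fst s (s!(j-1)) = j \<or> seq_snd s (s!(j-1)) = j)"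
      using sk k by auto
  qed
qed


lemma recon:
  assumes lr: "\<forall>i\<in>{1..n}. l i < r i" and dc: "distinct_coords n l r"
    and P: "\<forall>a b. 1 \<le> a \<longrightarrow> a < b \<longrightarrow> b \<le> 2*n \<longrightarrow> P a < (P b :: real)"
  defines "s \<equiv> coord_seq n l r"
  shows "\<forall>i\<in>{1..n}. P (seq_fst s i) < P (seq_snd s i)"
    "distinct_coords n (\<lambda>i. P (seq_fst s i)) (\<lambda>i. P (seq_snd s i))"
    "coord_seq n (\<lambda>i. P (seq_fst s i)) (\<lambda>i. P (seq_snd s i)) = s"
proof -
  define f where "f = (\<lambda>i. P (seq_fst s i))"
  define g where "g = (\<lambda>i. P (seq_snd s i))"
  have ls: "length s = 2*n" using key(1)[OF lr dc] unfolding s_def .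
  have K4: "\<forall>i\<in>{1..n}. 1 \<le> seq_fst s i \<and> seq_fst s i < seq_snd s i \<and> seq_snd s i \<le> 2*n
        \<and> s!(seq_fst s i - 1) = i \<and> s!(seq_snd s i - 1) = i"
    using key(4)[OF lr dc] unfolding s_def by blast
  have K5: "\<forall>j\<in>{1..2*n}. s!(j-1) \<in> {1..n} \<and> (seq_fst s (s!(j-1)) = j \<or> seq_snd s (s!(j-1)) = j)"
    using key(5)[OF lr dc] unfolding s_def .
  have Pinj: "a = b" if "a \<in> {1..2*n}" "b \<in> {1..2*n}" "P a = P b" for a b
  proof (rule ccontr)
    assume "a \<noteq> b"
    then consider "a < b" | "b < a" by linarith
    then show False using P that by cases (metis atLeastAtMost_iff less_irrefl)+
  qed
  have fg: "f i < g i" if "i \<in> {1..n}" for i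
    using K4 that P unfolding f_def g_def by blast
  then show "\<forall>i\<in>{1..n}. P (seq_fst s i) < P (seq_snd s i)" unfolding f_def g_def by blast
  have fr: "seq_fst s i \<in> {1..2*n}" "seq_snd s i \<in> {1..2*n}" if "i \<in> {1..n}" for i
  proof -
    have "1 \<le> seq_fst s i" "seq_fst s i < seq_snd s i" "seq_snd s i \<le> 2*n" using K4 that by auto
    then show "seq_fst s i \<in> {1..2*n}" "seq_snd s i \<in> {1..2*n}" by auto
  qed
  have dcf: "distinct_coords n f g"
    unfolding distinct_coords_def
  proof (intro conjI ballI)
    show "inj_on f {1..n}"
    proof (rule inj_onI)
      fix i k assume ik: "i \<in> {1..n}" "k \<in> {1..n}" "f i = f k"
      then have "seq_fst s i = seq_fst s k" using Pinj fr unfolding f_def by blast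
      then show "i = k" using K4 ik by metis
    qed
    show "inj_on g {1..n}"
    proof (rule inj_onI)
      fix i k assume ik: "i \<in> {1..n}" "k \<in> {1..n}" "g i = g k"
      then have "seq_snd s i = seq_snd s k" using Pinj fr unfolding g_def by blast
      then show "i = k" using K4 ik by metis
    qed
    fix i k assume ik: "i \<in> {1..n}" "k \<in> {1..n}"
    show "f i \<noteq> g k"
    proof
      assume "f i = g k"
      then have e: "seq_fst s i = seq_snd s k" using Pinj fr ik unfolding f_def g_def by blast
      then have "i = k" using K4 ik by metis
      then show False using e K4 ik by fastforce
    qed
  qed
  then show "distinct_coords n (\<lambda>i. P (seq_fst s i)) (\<lambda>i. P (seq_snd s i))" unfolding f_def g_def .
  have cv: "coord_vals n f g = P ` {1..2*n}"
  proof
    show "coord_vals n f g \<subseteq> P ` {1..2*n}"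
      unfolding coord_vals_def f_def g_def using fr by blast
    show "P ` {1..2*n} \<subseteq> coord_vals n f g"
    proof
      fix v assume "v \<in> P ` {1..2*n}"
      then obtain j where j: "j \<in> {1..2*n}" "v = P j" by blast
      with K5 have "s!(j-1) \<in> {1..n}" "seq_fst s (s!(j-1)) = j \<or> seq_snd s (s!(j-1)) = j" by auto
      then show "v \<in> coord_vals n f g" unfolding coord_vals_def f_def g_def using j by force
    qed
  qed
  have injP: "inj_on P {1..2*n}" using Pinj by (meson inj_onI)
  have sl: "sorted_list_of_set (P ` {1..2*n}) = map (\<lambda>j. P (Suc j)) [0..<2*n]"
  proof (subst sorted_list_of_set_unique[symmetric], simp, intro conjI)
    show "sorted_wrt (<) (map (\<lambda>j. P (Suc j)) [0..<2*n])"
      unfolding sorted_wrt_iff_nth_less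
    proof (intro allI impI)
      fix i j assume ij: "i < j" "j < length (map (\<lambda>j. P (Suc j)) [0..<2*n])"
      then have jn: "j < 2*n" by simp
      have "map (\<lambda>j. P (Suc j)) [0..<2*n] ! i = P (Suc i)" "map (\<lambda>j. P (Suc j)) [0..<2*n] ! j = P (Suc j)"
        using ij jn by simp_all
      then show "map (\<lambda>j. P (Suc j)) [0..<2*n] ! i < map (\<lambda>j. P (Suc j)) [0..<2*n] ! j" using P ij jn by simp
    qed
    have "{1..2*n} = Suc ` {0..<2*n}" by (auto simp: image_iff)
    then show "set (map (\<lambda>j. P (Suc j)) [0..<2*n]) = P ` {1..2*n}" by (simp only: set_map set_upt image_image)
    show "length (map (\<lambda>j. P (Suc j)) [0..<2*n]) = card (P ` {1..2*n})" using card_image[OF injP] by simp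
  qed
  have "coord_seq n f g = s"
  proof (rule nth_equalityI)
    show "length (coord_seq n f g) = length s" unfolding coord_seq_def cv sl ls by simp
    fix j assume "j < length (coord_seq n f g)"
    then have j: "j < 2*n" unfolding coord_seq_def cv sl by simp
    have "coord_seq n f g ! j = (THE i. i \<in> {1..n} \<and> (f i = P (Suc j) \<or> g i = P (Suc j)))"
      unfolding coord_seq_def cv sl using j by (simp add: nth_map)
    also have "\<dots> = s!j"
    proof (rule the_equality)
      have "Suc j \<in> {1..2*n}" using j by simp
      from K5[rule_format, OF this] have "s!j \<in> {1..n}" "seq_fst s (s!j) = Suc j \<or> seq_snd s (s!j) = Suc j" by auto
      then show "s!j \<in> {1..n} \<and> (f (s!j) = P (Suc j) \<or> g (s!j) = P (Suc j))"
        unfolding f_def g_def by auto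
      fix m assume m: "m \<in> {1..n} \<and> (f m = P (Suc j) \<or> g m = P (Suc j))"
      have sj: "Suc j \<in> {1..2*n}" using j by simp
      from m consider "seq_fst s m = Suc j" | "seq_snd s m = Suc j"
        using Pinj[OF fr(1) sj] Pinj[OF fr(2) sj] unfolding f_def g_def by blast
      then show "m = s!j" using K4 m by cases (metis diff_Suc_1)+
    qed
    finally show "coord_seq n f g ! j = s ! j" .
  qed
  then show "coord_seq n (\<lambda>i. P (seq_fst s i)) (\<lambda>i. P (seq_snd s i)) = s" unfolding f_def g_def .
qed


lemma sum_pos_range:
  fixes x :: "nat \<Rightarrow> real"
  assumes "\<forall>k\<in>{1..2*n-1}. x k \<ge> 1" "1 \<le> a" "a < b" "b \<le> 2*n"
  shows "(\<Sum>k\<in>{1..<a}. x k) < (\<Sum>k\<in>{1..<b}. x k)"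
proof -
  have "(\<Sum>k\<in>{1..<a}. x k) + (\<Sum>k\<in>{a..<b}. x k) = (\<Sum>k\<in>{1..<b}. x k)"
    using assms by (intro sum.atLeastLessThan_concat) auto
  moreover have "(\<Sum>k\<in>{a..<b}. x k) > 0"
  proof (rule sum_pos)
    show "finite {a..<b}" by simp
    show "{a..<b} \<noteq> {}" using assms by simp
    fix k assume "k \<in> {a..<b}"
    then have "k \<in> {1..2*n-1}" using assms by auto
    then show "0 < x k" using assms(1) by fastforce
  qed
  ultimately show ?thesis by linarith
qed

lemma diff_prefix:
  fixes x :: "nat \<Rightarrow> real"
  assumes "1 \<le> a" "a \<le> b"
  shows "(\<Sum>k\<in>{1..<b}. x k) - (\<Sum>k\<in>{1..<a}. x k) = (\<Sum>k\<in>{a..<b}. x k)"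
proof -
  have "(\<Sum>k\<in>{1..<a}. x k) + (\<Sum>k\<in>{a..<b}. x k) = (\<Sum>k\<in>{1..<b}. x k)"
    using assms by (intro sum.atLeastLessThan_concat) auto
  then show ?thesis by linarith
qed

theorem mainTheorem3:
  fixes n :: nat and l r b t :: "nat \<Rightarrow> real"
  assumes "rect_family n l r b t"
    and "distinct_coords n l r" and "distinct_coords n b t"
  shows "((\<exists>l' r' b' t' :: nat \<Rightarrow> real.
             square_family n l' r' b' t' \<and> distinct_coords n l' r' \<and> distinct_coords n b' t' \<and>
             coord_seq n l' r' = coord_seq n l r \<and> coord_seq n b' t' = coord_seq n b t)
          \<longleftrightarrow> (\<exists>x y. lp_feasible_sol n (coord_seq n l r) (coord_seq n b t) x y))
       \<and> (\<forall>x y. lp_feasible_sol n (coord_seq n l r) (coord_seq n b t) x y \<longrightarrow>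
            (let as = coord_seq n l r; bs = coord_seq n b t;
                 l' = (\<lambda>i. \<Sum>k\<in>{1..<seq_fst as i}. x k);
                 r' = (\<lambda>i. \<Sum>k\<in>{1..<seq_snd as i}. x k);
                 b' = (\<lambda>i. \<Sum>k\<in>{1..<seq_fst bs i}. y k);
                 t' = (\<lambda>i. \<Sum>k\<in>{1..<seq_snd bs i}. y k)
             in square_family n l' r' b' t' \<and> distinct_coords n l' r' \<and> distinct_coords n b' t' \<and>
                coord_seq n l' r' = as \<and> coord_seq n b' t' = bs))"
proof -
  have lr1: "\<forall>i\<in>{1..n}. l i < r i" and lr2: "\<forall>i\<in>{1..n}. b i < t i"
    using assms(1) unfolding rect_family_def by auto
  note dc1 = assms(2) and dc2 = assms(3)
  define as where "as = coord_seq n l r"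
  define bs where "bs = coord_seq n b t"
  have C: "let l' = (\<lambda>i. \<Sum>k\<in>{1..<seq_fst as i}. x k);
                 r' = (\<lambda>i. \<Sum>k\<in>{1..<seq_snd as i}. x k);
                 b' = (\<lambda>i. \<Sum>k\<in>{1..<seq_fst bs i}. y k);
                 t' = (\<lambda>i. \<Sum>k\<in>{1..<seq_snd bs i}. y k)
             in square_family n l' r' b' t' \<and> distinct_coords n l' r' \<and> distinct_coords n b' t' \<and>
                coord_seq n l' r' = as \<and> coord_seq n b' t' = bs"
    if F: "lp_feasible_sol n as bs x y" for x y
  proof -
    have x1: "\<forall>k\<in>{1..2*n-1}. x k \<ge> 1" and y1: "\<forall>k\<in>{1..2*n-1}. y k \<ge> 1"
      using F unfolding lp_feasible_sol_def by auto
    have eq: "\<forall>i\<in>{1..n}. (\<Sum>k\<in>{seq_fst as i..<seq_snd as i}. x k) = (\<Sum>k\<in>{seq_fst bs i..<seq_snd bs i}. y k)"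
      using F unfolding lp_feasible_sol_def by auto
    have Px: "\<forall>a c. 1 \<le> a \<longrightarrow> a < c \<longrightarrow> c \<le> 2*n \<longrightarrow> (\<Sum>k\<in>{1..<a}. x k) < (\<Sum>k\<in>{1..<c}. x k)"
      using sum_pos_range[OF x1] by blast
    have Py: "\<forall>a c. 1 \<le> a \<longrightarrow> a < c \<longrightarrow> c \<le> 2*n \<longrightarrow> (\<Sum>k\<in>{1..<a}. y k) < (\<Sum>k\<in>{1..<c}. y k)"
      using sum_pos_range[OF y1] by blast
    note R1 = recon[OF lr1 dc1 Px, folded as_def]
    note R2 = recon[OF lr2 dc2 Py, folded bs_def]
    have K1: "\<forall>i\<in>{1..n}. 1 \<le> seq_fst as i \<and> seq_fst as i < seq_snd as i"
      using key(4)[OF lr1 dc1, folded as_def] by blast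
    have K2: "\<forall>i\<in>{1..n}. 1 \<le> seq_fst bs i \<and> seq_fst bs i < seq_snd bs i"
      using key(4)[OF lr2 dc2, folded bs_def] by blast
    have sq: "square_family n (\<lambda>i. \<Sum>k\<in>{1..<seq_fst as i}. x k) (\<lambda>i. \<Sum>k\<in>{1..<seq_snd as i}. x k)
       (\<lambda>i. \<Sum>k\<in>{1..<seq_fst bs i}. y k) (\<lambda>i. \<Sum>k\<in>{1..<seq_snd bs i}. y k)"
      unfolding square_family_def rect_family_def
    proof (intro conjI ballI)
      fix i assume i: "i \<in> {1..n}"
      show "(\<Sum>k\<in>{1..<seq_fst as i}. x k) < (\<Sum>k\<in>{1..<seq_snd as i}. x k)" using R1(1) i by blast
      show "(\<Sum>k\<in>{1..<seq_fst bs i}. y k) < (\<Sum>k\<in>{1..<seq_snd bs i}. y k)" using R2(1) i by blast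
      have "(\<Sum>k\<in>{1..<seq_snd as i}. x k) - (\<Sum>k\<in>{1..<seq_fst as i}. x k) = (\<Sum>k\<in>{seq_fst as i..<seq_snd as i}. x k)"
        using K1[rule_format, OF i] by (intro diff_prefix) auto
      also have "\<dots> = (\<Sum>k\<in>{seq_fst bs i..<seq_snd bs i}. y k)" using eq i by blast
      also have "\<dots> = (\<Sum>k\<in>{1..<seq_snd bs i}. y k) - (\<Sum>k\<in>{1..<seq_fst bs i}. y k)"
        using K2[rule_format, OF i] by (intro diff_prefix[symmetric]) auto
      finally show "(\<Sum>k\<in>{1..<seq_snd as i}. x k) - (\<Sum>k\<in>{1..<seq_fst as i}. x k) =
         (\<Sum>k\<in>{1..<seq_snd bs i}. y k) - (\<Sum>k\<in>{1..<seq_fst bs i}. y k)" .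
    qed
    show ?thesis unfolding Let_def using sq R1(2,3) R2(2,3) by blast
  qed
  have fwd: "\<exists>x y. lp_feasible_sol n as bs x y"
    if "square_family n l' r' b' t'" "distinct_coords n l' r'" "distinct_coords n b' t'"
       "coord_seq n l' r' = as" "coord_seq n b' t' = bs" for l' r' b' t'
  proof -
    have lr1': "\<forall>i\<in>{1..n}. l' i < r' i" and lr2': "\<forall>i\<in>{1..n}. b' i < t' i"
      and sqe: "\<forall>i\<in>{1..n}. r' i - l' i = t' i - b' i"
      using that(1) unfolding square_family_def rect_family_def by auto
    define L where "L = sorted_list_of_set (coord_vals n l' r')"
    define M where "M = sorted_list_of_set (coord_vals n b' t')"
    have KL3: "\<forall>a c. a<c \<longrightarrow> c<2*n \<longrightarrow> L!a < L!c" using key(3)[OF lr1' that(2)] unfolding L_def .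
    have KM3: "\<forall>a c. a<c \<longrightarrow> c<2*n \<longrightarrow> M!a < M!c" using key(3)[OF lr2' that(3)] unfolding M_def .
    have KL4: "\<forall>i\<in>{1..n}. 1 \<le> seq_fst as i \<and> seq_fst as i < seq_snd as i \<and> seq_snd as i \<le> 2*n
        \<and> L!(seq_fst as i - 1) = l' i \<and> L!(seq_snd as i - 1) = r' i"
      using key(4)[OF lr1' that(2)] unfolding L_def that(4) by blast
    have KM4: "\<forall>i\<in>{1..n}. 1 \<le> seq_fst bs i \<and> seq_fst bs i < seq_snd bs i \<and> seq_snd bs i \<le> 2*n
        \<and> M!(seq_fst bs i - 1) = b' i \<and> M!(seq_snd bs i - 1) = t' i"
      using key(4)[OF lr2' that(3)] unfolding M_def that(5) by blast
    define fL where "fL k = L!(k-1)" for k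
    define fM where "fM k = M!(k-1)" for k
    define c where "c = (\<Sum>k\<in>{1..<2*n}. 1 / (fL (Suc k) - fL k) + 1 / (fM (Suc k) - fM k))"
    define x where "x k = c * (fL (Suc k) - fL k)" for k
    define y where "y k = c * (fM (Suc k) - fM k)" for k
    have gp: "fL (Suc k) - fL k > 0 \<and> fM (Suc k) - fM k > 0" if "k \<in> {1..<2*n}" for k
      using KL3 KM3 that unfolding fL_def fM_def by auto
    have cge: "c \<ge> 1 / (fL (Suc k) - fL k) \<and> c \<ge> 1 / (fM (Suc k) - fM k)" if k: "k \<in> {1..<2*n}" for k
    proof -
      have nn: "\<forall>j\<in>{1..<2*n}. 0 \<le> 1 / (fL (Suc j) - fL j) + 1 / (fM (Suc j) - fM j)"
        using gp by (simp add: less_imp_le)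
      have "1 / (fL (Suc k) - fL k) + 1 / (fM (Suc k) - fM k) \<le> c"
        unfolding c_def using member_le_sum[of k "{1..<2*n}" "\<lambda>j. 1 / (fL (Suc j) - fL j) + 1 / (fM (Suc j) - fM j)"] nn k
        by auto
      moreover have "0 \<le> 1 / (fL (Suc k) - fL k)" "0 \<le> 1 / (fM (Suc k) - fM k)" using gp[OF k] by auto
      ultimately show ?thesis by linarith
    qed
    have x1: "x k \<ge> 1 \<and> y k \<ge> 1" if "k \<in> {1..2*n-1}" for k
    proof -
      have k: "k \<in> {1..<2*n}" using that by auto
      have "x k \<ge> 1 / (fL (Suc k) - fL k) * (fL (Suc k) - fL k)"
        unfolding x_def using cge[OF k] gp[OF k] by (intro mult_right_mono) auto
      moreover have "y k \<ge> 1 / (fM (Suc k) - fM k) * (fM (Suc k) - fM k)"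
        unfolding y_def using cge[OF k] gp[OF k] by (intro mult_right_mono) auto
      ultimately show ?thesis using gp[OF k] by simp
    qed
    have "lp_feasible_sol n as bs x y"
      unfolding lp_feasible_sol_def
    proof (intro conjI ballI)
      fix k assume "k \<in> {1..2*n-1}"
      then show "1 \<le> x k" "1 \<le> y k" using x1 by auto
    next
      fix i assume i: "i \<in> {1..n}"
      have "(\<Sum>k\<in>{seq_fst as i..<seq_snd as i}. x k) = c * (\<Sum>k\<in>{seq_fst as i..<seq_snd as i}. fL (Suc k) - fL k)"
        unfolding x_def by (simp add: sum_distrib_left)
      also have "\<dots> = c * (fL (seq_snd as i) - fL (seq_fst as i))"
        using KL4[rule_format, OF i] by (subst sum_Suc_diff') auto
      also have "\<dots> = c * (r' i - l' i)" using KL4[rule_format, OF i] unfolding fL_def by auto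
      also have "\<dots> = c * (t' i - b' i)" using sqe[rule_format, OF i] by auto
      also have "\<dots> = c * (fM (seq_snd bs i) - fM (seq_fst bs i))" using KM4[rule_format, OF i] unfolding fM_def by auto
      also have "\<dots> = c * (\<Sum>k\<in>{seq_fst bs i..<seq_snd bs i}. fM (Suc k) - fM k)"
        using KM4[rule_format, OF i] by (subst sum_Suc_diff') auto
      also have "\<dots> = (\<Sum>k\<in>{seq_fst bs i..<seq_snd bs i}. y k)"
        unfolding y_def by (simp add: sum_distrib_left)
      finally show "(\<Sum>k\<in>{seq_fst as i..<seq_snd as i}. x k) = (\<Sum>k\<in>{seq_fst bs i..<seq_snd bs i}. y k)" .
    qed
    then show ?thesis by blast
  qed
  have main: "((\<exists>l' r' b' t' :: nat \<Rightarrow> real.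
             square_family n l' r' b' t' \<and> distinct_coords n l' r' \<and> distinct_coords n b' t' \<and>
             coord_seq n l' r' = as \<and> coord_seq n b' t' = bs)
          \<longleftrightarrow> (\<exists>x y. lp_feasible_sol n as bs x y))"
  proof
    assume "\<exists>l' r' b' t' :: nat \<Rightarrow> real.
             square_family n l' r' b' t' \<and> distinct_coords n l' r' \<and> distinct_coords n b' t' \<and>
             coord_seq n l' r' = as \<and> coord_seq n b' t' = bs"
    then show "\<exists>x y. lp_feasible_sol n as bs x y" using fwd by blast
  next
    assume "\<exists>x y. lp_feasible_sol n as bs x y"
    then obtain x y where "lp_feasible_sol n as bs x y" by blast
    from C[OF this] show "\<exists>l' r' b' t' :: nat \<Rightarrow> real.
             square_family n l' r' b' t' \<and> distinct_coords n l' r' \<and> distinct_coords n b' t' \<and>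
             coord_seq n l' r' = as \<and> coord_seq n b' t' = bs" unfolding Let_def by blast
  qed
  show ?thesis unfolding as_def[symmetric] bs_def[symmetric]
    using main C by (simp only: Let_def) blast
qed

end
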